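(* Let $n\ge 1$ and let $\Phi=\Phi(A,O,Y,\bar{\mathbf d})$ be an $n$-mode Gaussian superchannel, with $A=(a_{kl})$, $O=(o_{kl})$, $Y=(y_{kl})$ real $2n\times 2n$ matrices and $\bar{\mathbf d}=(\bar d_1,\dots,\bar d_{2n})^{\mathrm T}\in\mathbb R^{2n}$. Then $\Phi$ is a real Gaussian superchannel if and only if $$\bar d_{2k}=0\quad\text{and}\quad y_{2k-1,2l}=0\qquad\text{for all }k,l\in\{1,\dots,n\},\tag{a}$$ and moreover either $$a_{2k,2l-1}=a_{2k,2l}=0\qquad\text{for all }k,l\in\{1,\dots,n\},\tag{b}$$ or $$a_{2k-1,2l}=a_{2k,2l-1}=0\ \text{ and }\ o_{2k-1,2l}=o_{2k,2l-1}=0\qquad\text{for all }k,l\in\{1,\dots,n\}.\tag{c}$$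
   Context: Fix $n\ge1$. Let $\Delta_n=\bigoplus_{k=1}^n\begin{pmatrix}0&1\\-1&0\end{pmatrix}$ and $\Sigma_n=\bigoplus_{k=1}^n\begin{pmatrix}1&0\\0&-1\end{pmatrix}$ (both $2n\times2n$). An $n$-mode Gaussian channel is identified with a triple $\phi=\phi(T,N,\mathbf d)$, where $T=(t_{kl})$ and $N=(n_{kl})$ are real $2n\times 2n$ matrices with $N=N^{\mathrm T}\ge0$, $\mathbf d=(d_1,\dots,d_{2n})^{\mathrm T}\in\mathbb R^{2n}$, and $N+i\Delta_n-iT\Delta_nT^{\mathrm T}\ge0$ (it maps a Gaussian state with displacement vector $\bar{\mathbf d}_0$ and covariance matrix $\nu$ to the Gaussian state with displacement $T\bar{\mathbf d}_0+\mathbf d$ and covariance matrix $T\nu T^{\mathrm T}+N$). Such a channel is called real if $d_{2k}=0$ and $n_{2k-1,2l}=0$ for all $k,l\in\{1,\dots,n\}$, and either $t_{2k,2l-1}=t_{2k,2l}=0$ for all $k,l$, or $t_{2k-1,2l}=t_{2k,2l-1}=0$ for all $k,l$. An $n$-mode Gaussian superchannel is identified with a quadruple $\Phi=\Phi(A,O,Y,\bar{\mathbf d})$ of real $2n\times2n$ matrices $A,O,Y$ and a vector $\bar{\mathbf d}\in\mathbb R^{2n}$ with $Y=Y^{\mathrm T}$, $OO^{\mathrm T}=I_{2n}$, $Y+i\Delta_n-iA\Delta_nA^{\mathrm T}\ge0$ and $i\Delta_n-iO\Delta_nO^{\mathrm T}\ge0$; it acts on Gaussian channels by $\Phi(\phi(T,N,\mathbf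 d))=\phi(AT\Sigma_nO^{\mathrm T}\Sigma_n,\ ANA^{\mathrm T}+Y,\ A\mathbf d+\bar{\mathbf d})$. A Gaussian superchannel is called real if it maps every real Gaussian channel to a real Gaussian channel. *)

theory Defs
  imports Complex_Main "Jordan_Normal_Form.Matrix"
begin

text \<open>Conventions: matrices are Jordan_Normal_Form matrices of dimension 2n x 2n with
  0-based indices; the paper's 1-based index 2k-1 (resp. 2k) for k in 1..n corresponds to
  the 0-based index 2k (resp. 2k+1) for k < n.\<close>

definition Delta :: "nat \<Rightarrow> real mat" where
  "Delta n = mat (2*n) (2*n) (\<lambda>(i,j).
     if even i \<and> j = i + 1 then 1 else if odd i \<and> i = j + 1 then -1 else 0)"

definition Sigma :: "nat \<Rightarrow> real mat" where
  "Sigma n = mat (2*n) (2*n) (\<lambda>(i,j). if i = j then (if even i then 1 else -1) else 0)"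

definition cmat :: "real mat \<Rightarrow> complex mat" where
  "cmat M = map_mat complex_of_real M"

definition psd_real :: "nat \<Rightarrow> real mat \<Rightarrow> bool" where
  "psd_real m M \<longleftrightarrow> M \<in> carrier_mat m m \<and>
     (\<forall>v :: nat \<Rightarrow> real. (\<Sum>i<m. \<Sum>j<m. v i * M $$ (i,j) * v j) \<ge> 0)"

definition psd_complex :: "nat \<Rightarrow> complex mat \<Rightarrow> bool" where
  "psd_complex m M \<longleftrightarrow> M \<in> carrier_mat m m \<and>
     (\<forall>z :: nat \<Rightarrow> complex.
        let q = (\<Sum>i<m. \<Sum>j<m. cnj (z i) * M $$ (i,j) * z j) in Im q = 0 \<and> Re q \<ge> 0)"

definition gaussian_channel :: "nat \<Rightarrow> real mat \<Rightarrow> real mat \<Rightarrow> real vec \<Rightarrow> bool" where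
  "gaussian_channel n T N d \<longleftrightarrow>
     T \<in> carrier_mat (2*n) (2*n) \<and> N \<in> carrier_mat (2*n) (2*n) \<and> d \<in> carrier_vec (2*n) \<and>
     transpose_mat N = N \<and> psd_real (2*n) N \<and>
     psd_complex (2*n) (cmat N + \<i> \<cdot>\<^sub>m cmat (Delta n)
                          - \<i> \<cdot>\<^sub>m cmat (T * Delta n * transpose_mat T))"

definition real_gaussian_channel :: "nat \<Rightarrow> real mat \<Rightarrow> real mat \<Rightarrow> real vec \<Rightarrow> bool" where
  "real_gaussian_channel n T N d \<longleftrightarrow> gaussian_channel n T N d \<and>
     (\<forall>k<n. d $ (2*k+1) = 0) \<and>
     (\<forall>k<n. \<forall>l<n. N $$ (2*k, 2*l+1) = 0) \<and>
     ((\<forall>k<n. \<forall>l<n. T $$ (2*k+1, 2*l) = 0 \<and> T $$ (2*k+1, 2*l+1) = 0) \<or>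
      (\<forall>k<n. \<forall>l<n. T $$ (2*k, 2*l+1) = 0 \<and> T $$ (2*k+1, 2*l) = 0))"

definition gaussian_superchannel :: "nat \<Rightarrow> real mat \<Rightarrow> real mat \<Rightarrow> real mat \<Rightarrow> real vec \<Rightarrow> bool" where
  "gaussian_superchannel n A Om Y db \<longleftrightarrow>
     A \<in> carrier_mat (2*n) (2*n) \<and> Om \<in> carrier_mat (2*n) (2*n) \<and> Y \<in> carrier_mat (2*n) (2*n) \<and>
     db \<in> carrier_vec (2*n) \<and>
     transpose_mat Y = Y \<and> Om * transpose_mat Om = 1\<^sub>m (2*n) \<and>
     psd_complex (2*n) (cmat Y + \<i> \<cdot>\<^sub>m cmat (Delta n)
                          - \<i> \<cdot>\<^sub>m cmat (A * Delta n * transpose_mat A)) \<and>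
     psd_complex (2*n) (\<i> \<cdot>\<^sub>m cmat (Delta n) - \<i> \<cdot>\<^sub>m cmat (Om * Delta n * transpose_mat Om))"

text \<open>Action of the superchannel Phi(A,O,Y,db) on the channel phi(T,N,d).\<close>
definition super_T :: "nat \<Rightarrow> real mat \<Rightarrow> real mat \<Rightarrow> real mat \<Rightarrow> real mat" where
  "super_T n A Om T = A * T * Sigma n * transpose_mat Om * Sigma n"
definition super_N :: "real mat \<Rightarrow> real mat \<Rightarrow> real mat \<Rightarrow> real mat" where
  "super_N A Y N = A * N * transpose_mat A + Y"
definition super_d :: "real mat \<Rightarrow> real vec \<Rightarrow> real vec \<Rightarrow> real vec" where
  "super_d A db d = A *\<^sub>v d + db"

definition real_gaussian_superchannel :: "nat \<Rightarrow> real mat \<Rightarrow> real mat \<Rightarrow> real mat \<Rightarrow> real vec \<Rightarrow> bool" where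
  "real_gaussian_superchannel n A Om Y db \<longleftrightarrow> gaussian_superchannel n A Om Y db \<and>
     (\<forall>T N d. real_gaussian_channel n T N d \<longrightarrow>
        real_gaussian_channel n (super_T n A Om T) (super_N A Y N) (super_d A db d))"

end

theory Submission
  imports Defs "Jordan_Normal_Form.Determinant"
begin

definition cq :: "nat \<Rightarrow> real mat \<Rightarrow> (nat \<Rightarrow> complex) \<Rightarrow> complex" where
  "cq m R z = (\<Sum>i<m. \<Sum>j<m. cnj (z i) * complex_of_real (R $$ (i,j)) * z j)"

definition lin :: "nat \<Rightarrow> real mat \<Rightarrow> (nat \<Rightarrow> complex) \<Rightarrow> (nat \<Rightarrow> complex)" where
  "lin m P z = (\<lambda>r. \<Sum>i<m. complex_of_real (P $$ (i,r)) * z i)"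

lemma sc_prod_carrier: "v \<in> carrier_vec m \<Longrightarrow> w \<in> carrier_vec m \<Longrightarrow> v \<bullet> w = (\<Sum>i<m. v $ i * w $ i)"
  unfolding scalar_prod_def by (auto intro: sum.cong)

lemma mult_entry: "P \<in> carrier_mat m k \<Longrightarrow> R \<in> carrier_mat k l \<Longrightarrow> i < m \<Longrightarrow> j < l \<Longrightarrow>
   (P * R) $$ (i,j) = (\<Sum>r<k. P $$ (i,r) * R $$ (r,j))"
  by (auto simp: scalar_prod_def intro!: sum.cong)

lemma cq_add: "R1 \<in> carrier_mat m m \<Longrightarrow> R2 \<in> carrier_mat m m \<Longrightarrow> cq m (R1 + R2) z = cq m R1 z + cq m R2 z"
  unfolding cq_def by (auto simp: sum.distrib[symmetric] algebra_simps intro!: sum.cong)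

lemma cq_zero: "cq m (0\<^sub>m m m) z = 0"
  unfolding cq_def by simp

lemma cq_uminus: "R \<in> carrier_mat m m \<Longrightarrow> cq m (- R) z = - cq m R z"
  unfolding cq_def by (auto simp: sum_negf[symmetric] intro!: sum.cong)

lemma cq_cong_vec: "(\<And>i. i < m \<Longrightarrow> z i = w i) \<Longrightarrow> cq m R z = cq m R w"
  unfolding cq_def by (auto intro!: sum.cong)

lemma triple_entry:
  assumes P: "P \<in> carrier_mat m m" and R: "R \<in> carrier_mat m m" and ij: "i < m" "j < m"
  shows "(P * R * transpose_mat P) $$ (i,j) = (\<Sum>r<m. \<Sum>s<m. P $$ (i,r) * R $$ (r,s) * P $$ (j,s))"
proof -
  have PR: "P * R \<in> carrier_mat m m" using P R by simp
  have "(P * R * transpose_mat P) $$ (i,j) = (\<Sum>s<m. (P * R) $$ (i,s) * transpose_mat P $$ (s,j))"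
    by (rule mult_entry[OF PR _ ij]) (use P in simp)
  also have "\<dots> = (\<Sum>s<m. (\<Sum>r<m. P $$ (i,r) * R $$ (r,s)) * P $$ (j,s))"
    by (rule sum.cong[OF refl]) (subst mult_entry[OF P R ij(1)], insert P ij, auto)
  also have "\<dots> = (\<Sum>s<m. \<Sum>r<m. P $$ (i,r) * R $$ (r,s) * P $$ (j,s))"
    by (simp only: sum_distrib_right)
  also have "\<dots> = (\<Sum>r<m. \<Sum>s<m. P $$ (i,r) * R $$ (r,s) * P $$ (j,s))"
    by (rule sum.swap)
  finally show ?thesis .
qed

lemma cq_congr:
  assumes P: "P \<in> carrier_mat m m" and R: "R \<in> carrier_mat m m"
  shows "cq m (P * R * transpose_mat P) z = cq m R (lin m P z)"
proof -
  have "cq m (P * R * transpose_mat P) z =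
     (\<Sum>i<m. \<Sum>j<m. \<Sum>r<m. \<Sum>s<m. (cnj (z i) * of_real (P $$ (i,r))) * of_real (R $$ (r,s)) * (of_real (P $$ (j,s)) * z j))"
    unfolding cq_def
    by (rule sum.cong[OF refl], rule sum.cong[OF refl])
       (simp add: triple_entry[OF P R] sum_distrib_left sum_distrib_right mult.assoc)
  also have "\<dots> = (\<Sum>i<m. \<Sum>r<m. \<Sum>j<m. \<Sum>s<m. (cnj (z i) * of_real (P $$ (i,r))) * of_real (R $$ (r,s)) * (of_real (P $$ (j,s)) * z j))"
    by (rule sum.cong[OF refl], rule sum.swap)
  also have "\<dots> = (\<Sum>r<m. \<Sum>i<m. \<Sum>j<m. \<Sum>s<m. (cnj (z i) * of_real (P $$ (i,r))) * of_real (R $$ (r,s)) * (of_real (P $$ (j,s)) * z j))"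
    by (rule sum.swap)
  also have "\<dots> = (\<Sum>r<m. \<Sum>i<m. \<Sum>s<m. \<Sum>j<m. (cnj (z i) * of_real (P $$ (i,r))) * of_real (R $$ (r,s)) * (of_real (P $$ (j,s)) * z j))"
    by (rule sum.cong[OF refl], rule sum.cong[OF refl], rule sum.swap)
  also have "\<dots> = (\<Sum>r<m. \<Sum>s<m. \<Sum>i<m. \<Sum>j<m. (cnj (z i) * of_real (P $$ (i,r))) * of_real (R $$ (r,s)) * (of_real (P $$ (j,s)) * z j))"
    by (rule sum.cong[OF refl], rule sum.swap)
  also have "\<dots> = (\<Sum>r<m. \<Sum>s<m. \<Sum>j<m. \<Sum>i<m. (cnj (z i) * of_real (P $$ (i,r))) * of_real (R $$ (r,s)) * (of_real (P $$ (j,s)) * z j))"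
    by (rule sum.cong[OF refl], rule sum.cong[OF refl], rule sum.swap)
  also have "\<dots> = cq m R (lin m P z)"
    unfolding cq_def lin_def
    by (simp only: cnj_sum complex_cnj_mult complex_cnj_complex_of_real sum_distrib_left sum_distrib_right mult.commute[of "cnj _" "of_real _"])
  finally show ?thesis .
qed


lemma parity_ne[simp]: "2*k \<noteq> Suc (2*(l::nat))" "Suc (2*k) \<noteq> 2*(l::nat)" by presburger+

lemma sum2: "(\<Sum>i<2*(n::nat). f i) = (\<Sum>k<n. f (2*k)) + (\<Sum>k<n. f (2*k+1))"
  by (induction n) (simp_all add: algebra_simps)

lemma sum2_zero: "(\<And>k. k < n \<Longrightarrow> f (2*k) = 0) \<Longrightarrow> (\<And>k. k < n \<Longrightarrow> f (2*k+1) = 0) \<Longrightarrow> (\<Sum>i<2*(n::nat). f i) = 0"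
  unfolding sum2 by simp

lemma all2: "(\<forall>i<2*(n::nat). P i) \<longleftrightarrow> (\<forall>k<n. P (2*k) \<and> P (2*k+1))"
proof
  assume H: "\<forall>k<n. P (2*k) \<and> P (2*k+1)"
  show "\<forall>i<2*n. P i"
  proof (intro allI impI)
    fix i assume "i < 2*n"
    then show "P i" using H[rule_format, of "i div 2"]
      by (cases "even i") (auto elim!: evenE oddE)
  qed
qed auto

lemma Delta_dims[simp]: "dim_row (Delta n) = 2*n" "dim_col (Delta n) = 2*n" unfolding Delta_def by simp_all
lemma Sigma_dims[simp]: "dim_row (Sigma n) = 2*n" "dim_col (Sigma n) = 2*n" unfolding Sigma_def by simp_all
lemma Delta_carrier[simp]: "Delta n \<in> carrier_mat (2*n) (2*n)" unfolding Delta_def by simp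
lemma Sigma_carrier[simp]: "Sigma n \<in> carrier_mat (2*n) (2*n)" unfolding Sigma_def by simp
lemma Delta_entry: "i < 2*n \<Longrightarrow> j < 2*n \<Longrightarrow> Delta n $$ (i,j) =
  (if even i \<and> j = i + 1 then 1 else if odd i \<and> i = j + 1 then -1 else 0)"
  unfolding Delta_def by simp
lemma Sigma_entry: "i < 2*n \<Longrightarrow> j < 2*n \<Longrightarrow> Sigma n $$ (i,j) =
  (if i = j then (if even i then 1 else -1) else 0)"
  unfolding Sigma_def by simp

definition sg :: "nat \<Rightarrow> real" where "sg i = (if even i then 1 else -1)"

lemma Sigma_left: assumes "X \<in> carrier_mat (2*n) c" "i < 2*n" "j < c"
  shows "(Sigma n * X) $$ (i,j) = sg i * X $$ (i,j)"
proof -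
  have "(Sigma n * X) $$ (i,j) = (\<Sum>r<2*n. Sigma n $$ (i,r) * X $$ (r,j))"
    by (rule mult_entry[OF Sigma_carrier assms(1) assms(2,3)])
  also have "\<dots> = (\<Sum>r<2*n. if r = i then sg i * X $$ (r,j) else 0)"
    by (rule sum.cong) (auto simp: Sigma_entry assms sg_def)
  also have "\<dots> = sg i * X $$ (i,j)" using assms by simp
  finally show ?thesis .
qed

lemma Sigma_right: assumes "X \<in> carrier_mat r (2*n)" "i < r" "j < 2*n"
  shows "(X * Sigma n) $$ (i,j) = X $$ (i,j) * sg j"
proof -
  have "(X * Sigma n) $$ (i,j) = (\<Sum>s<2*n. X $$ (i,s) * Sigma n $$ (s,j))"
    by (rule mult_entry[OF assms(1) Sigma_carrier assms(2,3)])
  also have "\<dots> = (\<Sum>s<2*n. if s = j then X $$ (i,j) * sg j else 0)"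
    by (rule sum.cong) (auto simp: Sigma_entry assms sg_def)
  also have "\<dots> = X $$ (i,j) * sg j" using assms by simp
  finally show ?thesis .
qed

lemma Sigma_transpose: "transpose_mat (Sigma n) = Sigma n"
  by (rule eq_matI) (auto simp: Sigma_entry)

lemma SDS: "Sigma n * Delta n * transpose_mat (Sigma n) = - Delta n"
proof (rule eq_matI)
  fix i j assume ij: "i < dim_row (- Delta n)" "j < dim_col (- Delta n)"
  then have ij': "i < 2*n" "j < 2*n" by auto
  have "(Sigma n * Delta n * transpose_mat (Sigma n)) $$ (i,j) = sg i * Delta n $$ (i,j) * sg j"
    unfolding Sigma_transpose
    using Sigma_right[of "Sigma n * Delta n" "2*n" n i j] Sigma_left[of "Delta n" n "2*n" i j] ij'
      mult_carrier_mat[OF Sigma_carrier Delta_carrier] by simp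
  also have "\<dots> = (- Delta n) $$ (i,j)"
    using ij' by (auto simp: Delta_entry sg_def)
  finally show "(Sigma n * Delta n * transpose_mat (Sigma n)) $$ (i,j) = (- Delta n) $$ (i,j)" .
qed auto

definition cqc :: "nat \<Rightarrow> complex mat \<Rightarrow> (nat \<Rightarrow> complex) \<Rightarrow> complex" where
  "cqc m M z = (\<Sum>i<m. \<Sum>j<m. cnj (z i) * M $$ (i,j) * z j)"

definition ok :: "complex \<Rightarrow> bool" where "ok q \<longleftrightarrow> Im q = 0 \<and> Re q \<ge> 0"

lemma ok_add: "ok a \<Longrightarrow> ok b \<Longrightarrow> ok (a + b)" unfolding ok_def by simp

lemma psd_complex_iff: "psd_complex m M \<longleftrightarrow> M \<in> carrier_mat m m \<and> (\<forall>z. ok (cqc m M z))"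
  unfolding psd_complex_def cqc_def ok_def Let_def by simp

lemma cqc_add: "M1 \<in> carrier_mat m m \<Longrightarrow> M2 \<in> carrier_mat m m \<Longrightarrow> cqc m (M1 + M2) z = cqc m M1 z + cqc m M2 z"
  unfolding cqc_def by (auto simp: sum.distrib[symmetric] algebra_simps intro!: sum.cong)

lemma cqc_minus: "M1 \<in> carrier_mat m m \<Longrightarrow> M2 \<in> carrier_mat m m \<Longrightarrow> cqc m (M1 - M2) z = cqc m M1 z - cqc m M2 z"
  unfolding cqc_def by (auto simp: sum_subtractf[symmetric] algebra_simps intro!: sum.cong)

lemma cqc_smult: "M \<in> carrier_mat m m \<Longrightarrow> cqc m (c \<cdot>\<^sub>m M) z = c * cqc m M z"
  unfolding cqc_def by (auto simp: sum_distrib_left algebra_simps intro!: sum.cong)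

lemma cqc_cmat: "M \<in> carrier_mat m m \<Longrightarrow> cqc m (cmat M) z = cq m M z"
  unfolding cqc_def cq_def cmat_def by (auto intro!: sum.cong)

lemma cmat_carrier[simp]: "M \<in> carrier_mat a b \<Longrightarrow> cmat M \<in> carrier_mat a b"
  unfolding cmat_def by simp

lemma psd3: assumes "M1 \<in> carrier_mat m m" "M2 \<in> carrier_mat m m" "M3 \<in> carrier_mat m m"
  shows "psd_complex m (cmat M1 + \<i> \<cdot>\<^sub>m cmat M2 - \<i> \<cdot>\<^sub>m cmat M3) \<longleftrightarrow>
     (\<forall>z. ok (cq m M1 z + \<i> * cq m M2 z - \<i> * cq m M3 z))"
  using assms by (simp add: psd_complex_iff cqc_add cqc_minus cqc_smult cqc_cmat add_carrier_mat minus_carrier_mat smult_carrier_mat)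

lemma psd2: assumes "M2 \<in> carrier_mat m m" "M3 \<in> carrier_mat m m"
  shows "psd_complex m (\<i> \<cdot>\<^sub>m cmat M2 - \<i> \<cdot>\<^sub>m cmat M3) \<longleftrightarrow>
     (\<forall>z. ok (\<i> * cq m M2 z - \<i> * cq m M3 z))"
  using assms by (simp add: psd_complex_iff cqc_add cqc_minus cqc_smult cqc_cmat add_carrier_mat minus_carrier_mat smult_carrier_mat)

lemma cq_Delta: "cq (2*n) (Delta n) z = (\<Sum>k<n. cnj (z (2*k)) * z (2*k+1) - cnj (z (2*k+1)) * z (2*k))"
proof -
  have inner: "(\<Sum>j<2*n. cnj (z i) * complex_of_real (Delta n $$ (i,j)) * z j) =
     (if even i then cnj (z i) * z (i+1) else - (cnj (z i) * z (i - 1)))" if "i < 2*n" for i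
  proof (cases "even i")
    case True
    then have "i + 1 < 2*n" using that by presburger
    have "(\<Sum>j<2*n. cnj (z i) * complex_of_real (Delta n $$ (i,j)) * z j) =
          (\<Sum>j<2*n. if j = i + 1 then cnj (z i) * z (i+1) else 0)"
      by (rule sum.cong) (use that True in \<open>auto simp: Delta_entry\<close>)
    then show ?thesis using True \<open>i + 1 < 2*n\<close> by simp
  next
    case False
    then have "i - 1 < 2*n" "i = (i - 1) + 1" using that by (auto elim: oddE)
    have "(\<Sum>j<2*n. cnj (z i) * complex_of_real (Delta n $$ (i,j)) * z j) =
          (\<Sum>j<2*n. if j = i - 1 then - (cnj (z i) * z (i - 1)) else 0)"
      by (rule sum.cong) (use that False \<open>i = (i - 1) + 1\<close> in \<open>auto simp: Delta_entry\<close>)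
    then show ?thesis using False \<open>i - 1 < 2*n\<close> by simp
  qed
  have "cq (2*n) (Delta n) z = (\<Sum>i<2*n. if even i then cnj (z i) * z (i+1) else - (cnj (z i) * z (i - 1)))"
    unfolding cq_def by (rule sum.cong) (auto simp: inner)
  also have "\<dots> = (\<Sum>k<n. cnj (z (2*k)) * z (2*k+1) - cnj (z (2*k+1)) * z (2*k))"
    unfolding sum2 by (simp add: sum_subtractf sum_negf)
  finally show ?thesis .
qed

lemma cq_one: "cq m (1\<^sub>m m) z = (\<Sum>i<m. cnj (z i) * z i)"
proof -
  have "(\<Sum>j<m. cnj (z i) * complex_of_real (1\<^sub>m m $$ (i,j)) * z j) = cnj (z i) * z i" if "i < m" for i
  proof -
    have "(\<Sum>j<m. cnj (z i) * complex_of_real (1\<^sub>m m $$ (i,j)) * z j) = (\<Sum>j<m. if j = i then cnj (z i) * z i else 0)"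
      by (rule sum.cong) (use that in auto)
    then show ?thesis using that by simp
  qed
  then show ?thesis unfolding cq_def by simp
qed

lemma pair_ok: "ok (cnj a * a + cnj b * b + \<i> * (cnj a * b - cnj b * a))"
proof -
  have "Re (cnj a * a + cnj b * b + \<i> * (cnj a * b - cnj b * a)) = (Re a - Im b)^2 + (Im a + Re b)^2"
    by (simp add: power2_eq_square algebra_simps)
  moreover have "Im (cnj a * a + cnj b * b + \<i> * (cnj a * b - cnj b * a)) = 0"
    by (simp add: algebra_simps)
  ultimately show ?thesis unfolding ok_def by simp
qed

lemma ok_sum: "(\<And>k. k \<in> K \<Longrightarrow> ok (f k)) \<Longrightarrow> ok (sum f K)"
  unfolding ok_def by (simp add: Im_sum Re_sum sum_nonneg)

lemma one_Delta_ok: "ok (cq (2*n) (1\<^sub>m (2*n)) z + \<i> * cq (2*n) (Delta n) z)"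
proof -
  have "cq (2*n) (1\<^sub>m (2*n)) z + \<i> * cq (2*n) (Delta n) z =
     (\<Sum>k<n. cnj (z (2*k)) * z (2*k) + cnj (z (2*k+1)) * z (2*k+1) +
        \<i> * (cnj (z (2*k)) * z (2*k+1) - cnj (z (2*k+1)) * z (2*k)))"
    unfolding cq_one cq_Delta sum2 by (simp only: sum.distrib sum_distrib_left add.assoc)
  also have "ok \<dots>" by (rule ok_sum, rule pair_ok)
  finally show ?thesis .
qed


lemma lin_mult: assumes P: "P \<in> carrier_mat m m" and Q: "Q \<in> carrier_mat m m" and r: "r < m"
  shows "lin m Q (lin m P z) r = lin m (P * Q) z r"
proof -
  have "lin m Q (lin m P z) r = (\<Sum>i<m. \<Sum>k<m. of_real (Q $$ (i,r)) * (of_real (P $$ (k,i)) * z k))"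
    unfolding lin_def by (simp add: sum_distrib_left)
  also have "\<dots> = (\<Sum>k<m. \<Sum>i<m. of_real (Q $$ (i,r)) * (of_real (P $$ (k,i)) * z k))"
    by (rule sum.swap)
  also have "\<dots> = lin m (P * Q) z r"
    unfolding lin_def
    by (rule sum.cong[OF refl], subst mult_entry[OF P Q], simp_all add: r sum_distrib_right sum_distrib_left mult_ac)
  finally show ?thesis .
qed

lemma lin_one: "r < m \<Longrightarrow> lin m (1\<^sub>m m) z r = z r"
proof -
  assume r: "r < m"
  have "lin m (1\<^sub>m m) z r = (\<Sum>i<m. if i = r then z r else 0)"
    unfolding lin_def by (rule sum.cong) (use r in auto)
  then show ?thesis using r by simp
qed

lemma conj_mult: fixes P :: "real mat" assumes P: "P \<in> carrier_mat m m" and Q: "Q \<in> carrier_mat m m" and D: "D \<in> carrier_mat m m"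
  shows "(P * Q) * D * transpose_mat (P * Q) = P * (Q * D * transpose_mat Q) * transpose_mat P"
proof -
  have PT: "transpose_mat P \<in> carrier_mat m m" and QT: "transpose_mat Q \<in> carrier_mat m m" using P Q by auto
  have QD: "Q * D \<in> carrier_mat m m" using Q D by simp
  have QDQ: "Q * D * transpose_mat Q \<in> carrier_mat m m" using QD QT by simp
  have QP: "transpose_mat Q * transpose_mat P \<in> carrier_mat m m" using QT PT by simp
  have "(P * Q) * D * transpose_mat (P * Q) = (P * Q) * D * (transpose_mat Q * transpose_mat P)"
    by (simp only: transpose_mult[OF P Q])
  also have "\<dots> = P * (Q * D) * (transpose_mat Q * transpose_mat P)" by (simp only: assoc_mult_mat[OF P Q D])
  also have "\<dots> = P * ((Q * D) * (transpose_mat Q * transpose_mat P))"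
    by (rule assoc_mult_mat[OF P QD QP])
  also have "\<dots> = P * (((Q * D) * transpose_mat Q) * transpose_mat P)"
    by (simp only: assoc_mult_mat[OF QD QT PT, symmetric])
  also have "\<dots> = (P * ((Q * D) * transpose_mat Q)) * transpose_mat P"
    by (rule assoc_mult_mat[OF P QDQ PT, symmetric])
  finally show ?thesis .
qed

lemma output_psd:
  assumes A: "A \<in> carrier_mat (2*n) (2*n)" and O: "Om \<in> carrier_mat (2*n) (2*n)"
    and Y: "Y \<in> carrier_mat (2*n) (2*n)" and T: "T \<in> carrier_mat (2*n) (2*n)"
    and N: "N \<in> carrier_mat (2*n) (2*n)"
    and HA: "psd_complex (2*n) (cmat Y + \<i> \<cdot>\<^sub>m cmat (Delta n) - \<i> \<cdot>\<^sub>m cmat (A * Delta n * transpose_mat A))"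
    and HO: "psd_complex (2*n) (\<i> \<cdot>\<^sub>m cmat (Delta n) - \<i> \<cdot>\<^sub>m cmat (Om * Delta n * transpose_mat Om))"
    and HT: "psd_complex (2*n) (cmat N + \<i> \<cdot>\<^sub>m cmat (Delta n) - \<i> \<cdot>\<^sub>m cmat (T * Delta n * transpose_mat T))"
    and OO: "transpose_mat Om * Om = 1\<^sub>m (2*n)"
  shows "psd_complex (2*n) (cmat (super_N A Y N) + \<i> \<cdot>\<^sub>m cmat (Delta n)
            - \<i> \<cdot>\<^sub>m cmat (super_T n A Om T * Delta n * transpose_mat (super_T n A Om T)))"
proof -
  define m where "m = 2*n"
  define D where "D = Delta n"
  define S where "S = Sigma n"
  have D: "D \<in> carrier_mat m m" and S: "S \<in> carrier_mat m m" unfolding D_def S_def m_def by simp_all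
  note A = A[folded m_def] and O = O[folded m_def] and Y = Y[folded m_def] and T = T[folded m_def]
    and N = N[folded m_def]
  have OT: "transpose_mat Om \<in> carrier_mat m m" using O by simp
  have SDS': "S * D * transpose_mat S = - D" unfolding S_def D_def by (rule SDS)
  define B where "B = (S * transpose_mat Om) * S"
  have SO: "S * transpose_mat Om \<in> carrier_mat m m" using S OT by simp
  have B: "B \<in> carrier_mat m m" unfolding B_def using SO S by simp
  have TB: "T * B \<in> carrier_mat m m" using T B by simp
  have TS: "T * S \<in> carrier_mat m m" using T S by simp
  have TSO: "T * S * transpose_mat Om \<in> carrier_mat m m" using TS OT by simp
  have T'eq: "super_T n A Om T = A * (T * B)"
  proof -
    have "super_T n A Om T = A * T * S * transpose_mat Om * S" unfolding super_T_def S_def ..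
    also have "A * T * S = A * (T * S)" by (rule assoc_mult_mat[OF A T S])
    also have "A * (T * S) * transpose_mat Om = A * (T * S * transpose_mat Om)" by (rule assoc_mult_mat[OF A TS OT])
    also have "A * (T * S * transpose_mat Om) * S = A * (T * S * transpose_mat Om * S)" by (rule assoc_mult_mat[OF A TSO S])
    also have "T * S * transpose_mat Om = T * (S * transpose_mat Om)" by (rule assoc_mult_mat[OF T S OT])
    also have "T * (S * transpose_mat Om) * S = T * B" unfolding B_def by (rule assoc_mult_mat[OF T SO S])
    finally show ?thesis .
  qed
  have HA': "ok (cq m Y z + \<i> * cq m D z - \<i> * cq m (A * D * transpose_mat A) z)" for z
    using HA[folded m_def D_def] psd3[OF Y D, of "A * D * transpose_mat A"] A D by simp
  have HT': "ok (cq m N z + \<i> * cq m D z - \<i> * cq m (T * D * transpose_mat T) z)" for z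
    using HT[folded m_def D_def] psd3[OF N D, of "T * D * transpose_mat T"] T D by simp
  have HO': "ok (\<i> * cq m D z - \<i> * cq m (Om * D * transpose_mat Om) z)" for z
    using HO[folded m_def D_def] psd2[OF D, of "Om * D * transpose_mat Om"] O D by simp
  have SN: "super_N A Y N \<in> carrier_mat m m" unfolding super_N_def using A N Y by simp
  have T'c: "super_T n A Om T \<in> carrier_mat m m" unfolding T'eq using A TB by simp
  have T'D: "super_T n A Om T * D * transpose_mat (super_T n A Om T) \<in> carrier_mat m m" using T'c D by simp
  show ?thesis
    unfolding m_def[symmetric] D_def[symmetric]
  proof (subst psd3[OF SN D T'D], intro allI)
    fix z
    define w where "w = lin m A z"
    define u where "u = lin m T w"
    define p where "p = lin m (S * transpose_mat Om) u"
    have f1: "cq m (super_N A Y N) z = cq m N w + cq m Y z"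
    proof -
      have ANA: "A * N * transpose_mat A \<in> carrier_mat m m" using A N by simp
      show ?thesis unfolding super_N_def w_def by (simp only: cq_add[OF ANA Y] cq_congr[OF A N])
    qed
    have f2: "cq m (A * D * transpose_mat A) z = cq m D w"
      unfolding w_def by (rule cq_congr[OF A D])
    have f3: "cq m (T * D * transpose_mat T) w = cq m D u"
      unfolding u_def by (rule cq_congr[OF T D])
    have f4: "cq m (super_T n A Om T * D * transpose_mat (super_T n A Om T)) z = - cq m D p"
    proof -
      have "cq m (super_T n A Om T * D * transpose_mat (super_T n A Om T)) z
          = cq m (A * ((T * B) * D * transpose_mat (T * B)) * transpose_mat A) z"
        unfolding T'eq using conj_mult[OF A TB D] by simp
      also have "\<dots> = cq m ((T * B) * D * transpose_mat (T * B)) w"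
        unfolding w_def by (rule cq_congr[OF A]) (use TB D in simp)
      also have "\<dots> = cq m (T * (B * D * transpose_mat B) * transpose_mat T) w"
        using conj_mult[OF T B D] by simp
      also have "\<dots> = cq m (B * D * transpose_mat B) u"
        unfolding u_def by (rule cq_congr[OF T]) (use B D in simp)
      also have "B * D * transpose_mat B = (S * transpose_mat Om) * (S * D * transpose_mat S) * transpose_mat (S * transpose_mat Om)"
        unfolding B_def by (rule conj_mult[OF SO S D])
      also have "\<dots> = (S * transpose_mat Om) * (- D) * transpose_mat (S * transpose_mat Om)"
        unfolding SDS' ..
      also have "cq m \<dots> u = cq m (- D) p"
        unfolding p_def by (rule cq_congr[OF SO]) (use D in simp)
      also have "\<dots> = - cq m D p" using D by (simp add: cq_uminus)
      finally show ?thesis .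
    qed
    have f5: "cq m (Om * D * transpose_mat Om) p = - cq m D u"
    proof -
      have "cq m (Om * D * transpose_mat Om) p = cq m D (lin m Om p)"
        by (rule cq_congr[OF O D])
      also have "\<dots> = cq m D (lin m S u)"
      proof (rule cq_cong_vec)
        fix i assume i: "i < m"
        have "lin m Om p i = lin m ((S * transpose_mat Om) * Om) u i"
          unfolding p_def by (rule lin_mult[OF SO O i])
        also have "(S * transpose_mat Om) * Om = S"
          using S OT O OO[folded m_def] by simp
        finally show "lin m Om p i = lin m S u i" .
      qed
      also have "\<dots> = cq m (S * D * transpose_mat S) u"
        by (rule cq_congr[OF S D, symmetric])
      also have "\<dots> = - cq m D u" unfolding SDS' using D by (simp add: cq_uminus)
      finally show ?thesis .
    qed
    have "cq m (super_N A Y N) z + \<i> * cq m D z - \<i> * cq m (super_T n A Om T * D * transpose_mat (super_T n A Om T)) z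
       = (cq m Y z + \<i> * cq m D z - \<i> * cq m (A * D * transpose_mat A) z)
         + (cq m N w + \<i> * cq m D w - \<i> * cq m (T * D * transpose_mat T) w)
         + (\<i> * cq m D p - \<i> * cq m (Om * D * transpose_mat Om) p)"
      unfolding f1 f2 f3 f4 f5 by (simp add: algebra_simps)
    also have "ok \<dots>" by (intro ok_add HA' HT' HO')
    finally show "ok (cq m (super_N A Y N) z + \<i> * cq m D z - \<i> * cq m (super_T n A Om T * D * transpose_mat (super_T n A Om T)) z)" .
  qed
qed


lemma superT_entry:
  assumes A: "A \<in> carrier_mat (2*n) (2*n)" and O: "Om \<in> carrier_mat (2*n) (2*n)"
    and T: "T \<in> carrier_mat (2*n) (2*n)" and i: "i < 2*n" and j: "j < 2*n"
  shows "super_T n A Om T $$ (i,j) = (\<Sum>s<2*n. (\<Sum>r<2*n. A $$ (i,r) * T $$ (r,s)) * sg s * Om $$ (j,s)) * sg j"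
proof -
  have AT: "A * T \<in> carrier_mat (2*n) (2*n)" using A T by simp
  have ATS: "A * T * Sigma n \<in> carrier_mat (2*n) (2*n)" using AT by simp
  have OT: "transpose_mat Om \<in> carrier_mat (2*n) (2*n)" using O by simp
  have ATSO: "A * T * Sigma n * transpose_mat Om \<in> carrier_mat (2*n) (2*n)" using ATS OT by simp
  have "super_T n A Om T $$ (i,j) = (A * T * Sigma n * transpose_mat Om) $$ (i,j) * sg j"
    unfolding super_T_def by (rule Sigma_right[OF ATSO i j])
  also have "(A * T * Sigma n * transpose_mat Om) $$ (i,j) = (\<Sum>s<2*n. (A * T * Sigma n) $$ (i,s) * transpose_mat Om $$ (s,j))"
    by (rule mult_entry[OF ATS OT i j])
  also have "\<dots> = (\<Sum>s<2*n. (\<Sum>r<2*n. A $$ (i,r) * T $$ (r,s)) * sg s * Om $$ (j,s))"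
  proof (rule sum.cong[OF refl])
    fix s assume "s \<in> {..<2*n}"
    then have s: "s < 2*n" by simp
    have "(A * T * Sigma n) $$ (i,s) = (A * T) $$ (i,s) * sg s" by (rule Sigma_right[OF AT i s])
    moreover have "(A * T) $$ (i,s) = (\<Sum>r<2*n. A $$ (i,r) * T $$ (r,s))" by (rule mult_entry[OF A T i s])
    moreover have "transpose_mat Om $$ (s,j) = Om $$ (j,s)" using O s j by simp
    ultimately show "(A * T * Sigma n) $$ (i,s) * transpose_mat Om $$ (s,j) = (\<Sum>r<2*n. A $$ (i,r) * T $$ (r,s)) * sg s * Om $$ (j,s)"
      by simp
  qed
  finally show ?thesis .
qed

lemma superN_entry:
  assumes A: "A \<in> carrier_mat (2*n) (2*n)" and N: "N \<in> carrier_mat (2*n) (2*n)"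
    and Y: "Y \<in> carrier_mat (2*n) (2*n)" and i: "i < 2*n" and j: "j < 2*n"
  shows "super_N A Y N $$ (i,j) = (\<Sum>r<2*n. \<Sum>s<2*n. A $$ (i,r) * N $$ (r,s) * A $$ (j,s)) + Y $$ (i,j)"
proof -
  have "super_N A Y N $$ (i,j) = (A * N * transpose_mat A) $$ (i,j) + Y $$ (i,j)"
    unfolding super_N_def using Y i j by simp
  then show ?thesis using triple_entry[OF A N i j] by simp
qed

lemma superd_entry:
  assumes A: "A \<in> carrier_mat (2*n) (2*n)" and d: "d \<in> carrier_vec (2*n)"
    and db: "db \<in> carrier_vec (2*n)" and i: "i < 2*n"
  shows "super_d A db d $ i = (\<Sum>r<2*n. A $$ (i,r) * d $ r) + db $ i"
  unfolding super_d_def using A d db i by (simp add: scalar_prod_def atLeast0LessThan)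

lemma sg_nz[simp]: "sg i \<noteq> 0" unfolding sg_def by simp

definition rq :: "nat \<Rightarrow> real mat \<Rightarrow> (nat \<Rightarrow> real) \<Rightarrow> real" where
  "rq m R v = (\<Sum>i<m. \<Sum>j<m. v i * R $$ (i,j) * v j)"

lemma cq_real: "cq m R (\<lambda>i. complex_of_real (v i)) = complex_of_real (rq m R v)"
  unfolding cq_def rq_def by simp

lemma lin_real: "lin m P (\<lambda>i. complex_of_real (v i)) = (\<lambda>r. complex_of_real (\<Sum>i<m. P $$ (i,r) * v i))"
  unfolding lin_def by simp

lemma rq_add: "R1 \<in> carrier_mat m m \<Longrightarrow> R2 \<in> carrier_mat m m \<Longrightarrow> rq m (R1 + R2) v = rq m R1 v + rq m R2 v"
  unfolding rq_def by (auto simp: sum.distrib[symmetric] algebra_simps intro!: sum.cong)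

lemma output_psd_real:
  assumes A: "A \<in> carrier_mat (2*n) (2*n)"
    and Y: "Y \<in> carrier_mat (2*n) (2*n)" 
    and N: "N \<in> carrier_mat (2*n) (2*n)"
    and HA: "psd_complex (2*n) (cmat Y + \<i> \<cdot>\<^sub>m cmat (Delta n) - \<i> \<cdot>\<^sub>m cmat (A * Delta n * transpose_mat A))"
    and PN: "psd_real (2*n) N"
  shows "psd_real (2*n) (super_N A Y N)"
proof -
  define m where "m = 2*n"
  note A = A[folded m_def] and Y = Y[folded m_def] and N = N[folded m_def]
  have D: "Delta n \<in> carrier_mat m m" unfolding m_def by simp
  have ANA: "A * N * transpose_mat A \<in> carrier_mat m m" using A N by simp
  have SN: "super_N A Y N \<in> carrier_mat m m" unfolding super_N_def using ANA Y by simp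
  have "rq m (super_N A Y N) v \<ge> 0" for v
  proof -
    define z where "z = (\<lambda>i. complex_of_real (v i))"
    define w where "w = (\<lambda>r. (\<Sum>i<m. A $$ (i,r) * v i))"
    have "complex_of_real (rq m (A * N * transpose_mat A) v) = cq m N (lin m A z)"
      unfolding z_def cq_real[symmetric] by (rule cq_congr[OF A N])
    also have "\<dots> = complex_of_real (rq m N w)"
      unfolding z_def lin_real w_def cq_real ..
    finally have e1: "rq m (A * N * transpose_mat A) v = rq m N w" by simp
    have "rq m N w \<ge> 0" using PN unfolding psd_real_def m_def rq_def by simp
    moreover have "rq m Y v \<ge> 0"
    proof -
      have "ok (cq m Y z + \<i> * cq m (Delta n) z - \<i> * cq m (A * Delta n * transpose_mat A) z)"
        using HA[folded m_def] psd3[OF Y D, of "A * Delta n * transpose_mat A"] A D by simp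
      then show ?thesis unfolding z_def cq_real ok_def by simp
    qed
    ultimately show ?thesis unfolding super_N_def rq_add[OF ANA Y] e1 by simp
  qed
  then show ?thesis unfolding psd_real_def rq_def m_def[symmetric] using SN by simp
qed


lemma zl: "x = 0 \<Longrightarrow> x * a * b = (0::real)" by simp
lemma zr: "b = 0 \<Longrightarrow> x * a * b = (0::real)" by simp

lemma reverse_real:
  assumes GS: "gaussian_superchannel n A Om Y db"
    and ca: "(\<forall>k<n. db $ (2*k+1) = 0) \<and> (\<forall>k<n. \<forall>l<n. Y $$ (2*k, 2*l+1) = 0)"
    and cbc: "(\<forall>k<n. \<forall>l<n. A $$ (2*k+1, 2*l) = 0 \<and> A $$ (2*k+1, 2*l+1) = 0) \<or>
     (\<forall>k<n. \<forall>l<n. A $$ (2*k, 2*l+1) = 0 \<and> A $$ (2*k+1, 2*l) = 0 \<and>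
                  Om $$ (2*k, 2*l+1) = 0 \<and> Om $$ (2*k+1, 2*l) = 0)"
    and RC: "real_gaussian_channel n T N d"
  shows "real_gaussian_channel n (super_T n A Om T) (super_N A Y N) (super_d A db d)"
proof -
  from GS have A: "A \<in> carrier_mat (2*n) (2*n)" and O: "Om \<in> carrier_mat (2*n) (2*n)"
    and Y: "Y \<in> carrier_mat (2*n) (2*n)" and db: "db \<in> carrier_vec (2*n)"
    and Ysym: "transpose_mat Y = Y" and OOT: "Om * transpose_mat Om = 1\<^sub>m (2*n)"
    and HA: "psd_complex (2*n) (cmat Y + \<i> \<cdot>\<^sub>m cmat (Delta n) - \<i> \<cdot>\<^sub>m cmat (A * Delta n * transpose_mat A))"
    and HO: "psd_complex (2*n) (\<i> \<cdot>\<^sub>m cmat (Delta n) - \<i> \<cdot>\<^sub>m cmat (Om * Delta n * transpose_mat Om))"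
    unfolding gaussian_superchannel_def by auto
  from RC have T: "T \<in> carrier_mat (2*n) (2*n)" and N: "N \<in> carrier_mat (2*n) (2*n)"
    and d: "d \<in> carrier_vec (2*n)" and Nsym: "transpose_mat N = N" and PN: "psd_real (2*n) N"
    and HT: "psd_complex (2*n) (cmat N + \<i> \<cdot>\<^sub>m cmat (Delta n) - \<i> \<cdot>\<^sub>m cmat (T * Delta n * transpose_mat T))"
    and dr: "\<forall>k<n. d $ (2*k+1) = 0" and Nr: "\<forall>k<n. \<forall>l<n. N $$ (2*k, 2*l+1) = 0"
    and Tr: "(\<forall>k<n. \<forall>l<n. T $$ (2*k+1, 2*l) = 0 \<and> T $$ (2*k+1, 2*l+1) = 0) \<or>
      (\<forall>k<n. \<forall>l<n. T $$ (2*k, 2*l+1) = 0 \<and> T $$ (2*k+1, 2*l) = 0)"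
    unfolding real_gaussian_channel_def gaussian_channel_def by auto
  have OT: "transpose_mat Om \<in> carrier_mat (2*n) (2*n)" using O by simp
  have OTO: "transpose_mat Om * Om = 1\<^sub>m (2*n)" by (rule mat_mult_left_right_inverse[OF O OT OOT])
  have Aoe: "\<forall>k<n. \<forall>l<n. A $$ (2*k+1, 2*l) = 0" using cbc by auto
  have Nsym': "N $$ (r,s) = N $$ (s,r)" if "r < 2*n" "s < 2*n" for r s
  proof -
    have "N $$ (r,s) = transpose_mat N $$ (r,s)" using Nsym by simp
    also have "\<dots> = N $$ (s,r)" using N that by simp
    finally show ?thesis .
  qed
  have Ysym': "Y $$ (r,s) = Y $$ (s,r)" if "r < 2*n" "s < 2*n" for r s
  proof -
    have "Y $$ (r,s) = transpose_mat Y $$ (r,s)" using Ysym by simp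
    also have "\<dots> = Y $$ (s,r)" using Y that by simp
    finally show ?thesis .
  qed
  have SNc: "super_N A Y N \<in> carrier_mat (2*n) (2*n)" unfolding super_N_def using A N Y by simp
  have STc: "super_T n A Om T \<in> carrier_mat (2*n) (2*n)"
  proof -
    have AT: "A * T \<in> carrier_mat (2*n) (2*n)" using A T by simp
    have ATS: "A * T * Sigma n \<in> carrier_mat (2*n) (2*n)" using AT by simp
    have ATSO: "A * T * Sigma n * transpose_mat Om \<in> carrier_mat (2*n) (2*n)" using ATS OT by simp
    show ?thesis unfolding super_T_def using ATSO by simp
  qed
  have Sdc: "super_d A db d \<in> carrier_vec (2*n)" unfolding super_d_def using A d db by simp
  have Nsym2: "transpose_mat (super_N A Y N) = super_N A Y N"
  proof (rule eq_matI)
    fix i j assume "i < dim_row (super_N A Y N)" "j < dim_col (super_N A Y N)"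
    then have i: "i < 2*n" and j: "j < 2*n" using SNc by auto
    have "transpose_mat (super_N A Y N) $$ (i,j) = super_N A Y N $$ (j,i)" using SNc i j by simp
    also have "\<dots> = (\<Sum>r<2*n. \<Sum>s<2*n. A $$ (j,r) * N $$ (r,s) * A $$ (i,s)) + Y $$ (j,i)"
      by (rule superN_entry[OF A N Y j i])
    also have "(\<Sum>r<2*n. \<Sum>s<2*n. A $$ (j,r) * N $$ (r,s) * A $$ (i,s)) = (\<Sum>s<2*n. \<Sum>r<2*n. A $$ (j,r) * N $$ (r,s) * A $$ (i,s))"
      by (rule sum.swap)
    also have "\<dots> = (\<Sum>s<2*n. \<Sum>r<2*n. A $$ (i,s) * N $$ (s,r) * A $$ (j,r))"
      by (intro sum.cong refl) (simp add: Nsym')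
    also have "Y $$ (j,i) = Y $$ (i,j)" using Ysym' i j by simp
    also have "(\<Sum>s<2*n. \<Sum>r<2*n. A $$ (i,s) * N $$ (s,r) * A $$ (j,r)) + Y $$ (i,j) = super_N A Y N $$ (i,j)"
      by (rule superN_entry[OF A N Y i j, symmetric])
    finally show "transpose_mat (super_N A Y N) $$ (i,j) = super_N A Y N $$ (i,j)" .
  qed (use SNc in auto)
  have GC: "gaussian_channel n (super_T n A Om T) (super_N A Y N) (super_d A db d)"
    unfolding gaussian_channel_def
    using STc SNc Sdc Nsym2 output_psd_real[OF A Y N HA PN] output_psd[OF A O Y T N HA HO HT OTO] by simp
  have R1: "super_d A db d $ (2*k+1) = 0" if k: "k < n" for k
  proof -
    have "(\<Sum>r<2*n. A $$ (2*k+1,r) * d $ r) = 0"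
      by (rule sum2_zero) (use Aoe dr k in auto)
    then show ?thesis using superd_entry[OF A d db, of "2*k+1"] ca k by simp
  qed
  have R2: "super_N A Y N $$ (2*k, 2*l+1) = 0" if k: "k < n" and l: "l < n" for k l
  proof -
    have "(\<Sum>r<2*n. \<Sum>s<2*n. A $$ (2*k,r) * N $$ (r,s) * A $$ (2*l+1,s)) = 0"
      using cbc
    proof
      assume H: "\<forall>k<n. \<forall>l<n. A $$ (2*k+1, 2*l) = 0 \<and> A $$ (2*k+1, 2*l+1) = 0"
      show ?thesis
        by (intro sum.neutral ballI sum2_zero zr) (use H l in auto)
    next
      assume H: "\<forall>k<n. \<forall>l<n. A $$ (2*k, 2*l+1) = 0 \<and> A $$ (2*k+1, 2*l) = 0 \<and>
                  Om $$ (2*k, 2*l+1) = 0 \<and> Om $$ (2*k+1, 2*l) = 0"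
      show ?thesis
      proof (rule sum2_zero)
        fix j assume j: "j < n"
        show "(\<Sum>s<2*n. A $$ (2*k,2*j) * N $$ (2*j,s) * A $$ (2*l+1,s)) = 0"
          by (rule sum2_zero) (use H Nr j l in auto)
      next
        fix j assume j: "j < n"
        show "(\<Sum>s<2*n. A $$ (2*k,2*j+1) * N $$ (2*j+1,s) * A $$ (2*l+1,s)) = 0"
          by (intro sum.neutral ballI) (use H j k in auto)
      qed
    qed
    then show ?thesis using superN_entry[OF A N Y, of "2*k" "2*l+1"] ca k l by simp
  qed
  have R3: "(\<forall>k<n. \<forall>l<n. super_T n A Om T $$ (2*k+1, 2*l) = 0 \<and> super_T n A Om T $$ (2*k+1, 2*l+1) = 0) \<or>
      (\<forall>k<n. \<forall>l<n. super_T n A Om T $$ (2*k, 2*l+1) = 0 \<and> super_T n A Om T $$ (2*k+1, 2*l) = 0)"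
    using cbc
  proof
    assume H: "\<forall>k<n. \<forall>l<n. A $$ (2*k+1, 2*l) = 0 \<and> A $$ (2*k+1, 2*l+1) = 0"
    have "super_T n A Om T $$ (2*k+1, j) = 0" if k: "k < n" and j: "j < 2*n" for k j
    proof -
      have "(\<Sum>s<2*n. (\<Sum>r<2*n. A $$ (2*k+1,r) * T $$ (r,s)) * sg s * Om $$ (j,s)) = 0"
        by (intro sum.neutral ballI zl sum2_zero) (use H k in auto)
      then show ?thesis using superT_entry[OF A O T, of "2*k+1" j] k j by simp
    qed
    then show ?thesis by auto
  next
    assume H: "\<forall>k<n. \<forall>l<n. A $$ (2*k, 2*l+1) = 0 \<and> A $$ (2*k+1, 2*l) = 0 \<and>
                  Om $$ (2*k, 2*l+1) = 0 \<and> Om $$ (2*k+1, 2*l) = 0"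
    show ?thesis using Tr
    proof
      assume HT1: "\<forall>k<n. \<forall>l<n. T $$ (2*k+1, 2*l) = 0 \<and> T $$ (2*k+1, 2*l+1) = 0"
      have "super_T n A Om T $$ (2*k+1, j) = 0" if k: "k < n" and j: "j < 2*n" for k j
      proof -
        have "(\<Sum>s<2*n. (\<Sum>r<2*n. A $$ (2*k+1,r) * T $$ (r,s)) * sg s * Om $$ (j,s)) = 0"
        proof (rule sum2_zero)
          fix i assume i: "i < n"
          show "(\<Sum>r<2*n. A $$ (2*k+1,r) * T $$ (r,2*i)) * sg (2*i) * Om $$ (j,2*i) = 0"
            by (intro zl sum2_zero) (use H HT1 i k in auto)
        next
          fix i assume i: "i < n"
          show "(\<Sum>r<2*n. A $$ (2*k+1,r) * T $$ (r,2*i+1)) * sg (2*i+1) * Om $$ (j,2*i+1) = 0"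
            by (intro zl sum2_zero) (use H HT1 i k in auto)
        qed
        then show ?thesis using superT_entry[OF A O T, of "2*k+1" j] k j by simp
      qed
      then show ?thesis by auto
    next
      assume HT2: "\<forall>k<n. \<forall>l<n. T $$ (2*k, 2*l+1) = 0 \<and> T $$ (2*k+1, 2*l) = 0"
      have e1: "super_T n A Om T $$ (2*k, 2*l+1) = 0" if k: "k < n" and l: "l < n" for k l
      proof -
        have "(\<Sum>s<2*n. (\<Sum>r<2*n. A $$ (2*k,r) * T $$ (r,s)) * sg s * Om $$ (2*l+1,s)) = 0"
        proof (rule sum2_zero)
          fix i assume i: "i < n"
          show "(\<Sum>r<2*n. A $$ (2*k,r) * T $$ (r,2*i)) * sg (2*i) * Om $$ (2*l+1,2*i) = 0"
            by (rule zr) (use H i l in auto)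
        next
          fix i assume i: "i < n"
          show "(\<Sum>r<2*n. A $$ (2*k,r) * T $$ (r,2*i+1)) * sg (2*i+1) * Om $$ (2*l+1,2*i+1) = 0"
            by (intro zl sum2_zero) (use H HT2 i k in auto)
        qed
        then show ?thesis using superT_entry[OF A O T, of "2*k" "2*l+1"] k l by simp
      qed
      have e2: "super_T n A Om T $$ (2*k+1, 2*l) = 0" if k: "k < n" and l: "l < n" for k l
      proof -
        have "(\<Sum>s<2*n. (\<Sum>r<2*n. A $$ (2*k+1,r) * T $$ (r,s)) * sg s * Om $$ (2*l,s)) = 0"
        proof (rule sum2_zero)
          fix i assume i: "i < n"
          show "(\<Sum>r<2*n. A $$ (2*k+1,r) * T $$ (r,2*i)) * sg (2*i) * Om $$ (2*l,2*i) = 0"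
            by (intro zl sum2_zero) (use H HT2 i k in auto)
        next
          fix i assume i: "i < n"
          show "(\<Sum>r<2*n. A $$ (2*k+1,r) * T $$ (r,2*i+1)) * sg (2*i+1) * Om $$ (2*l,2*i+1) = 0"
            by (rule zr) (use H i l in auto)
        qed
        then show ?thesis using superT_entry[OF A O T, of "2*k+1" "2*l"] k l by simp
      qed
      show ?thesis using e1 e2 by auto
    qed
  qed
  show ?thesis unfolding real_gaussian_channel_def using GC R1 R2 R3 by auto
qed


lemma id_channel_real:
  assumes d: "d \<in> carrier_vec (2*n)" and dr: "\<forall>k<n. d $ (2*k+1) = 0"
  shows "real_gaussian_channel n (1\<^sub>m (2*n)) (0\<^sub>m (2*n) (2*n)) d"
proof -
  have D: "Delta n \<in> carrier_mat (2*n) (2*n)" by simp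
  have e: "1\<^sub>m (2*n) * Delta n * transpose_mat (1\<^sub>m (2*n)) = Delta n" by simp
  have psd: "psd_complex (2*n) (cmat (0\<^sub>m (2*n) (2*n)) + \<i> \<cdot>\<^sub>m cmat (Delta n)
      - \<i> \<cdot>\<^sub>m cmat (1\<^sub>m (2*n) * Delta n * transpose_mat (1\<^sub>m (2*n))))"
    unfolding e by (subst psd3) (auto simp: cq_zero ok_def)
  have psdr: "psd_real (2*n) (0\<^sub>m (2*n) (2*n))" unfolding psd_real_def by simp
  have tr: "transpose_mat (0\<^sub>m (2*n) (2*n)) = (0\<^sub>m (2*n) (2*n) :: real mat)" by (rule eq_matI) auto
  show ?thesis unfolding real_gaussian_channel_def gaussian_channel_def
    using d dr psd psdr tr by auto
qed

definition TT :: "nat \<Rightarrow> nat set \<Rightarrow> nat \<Rightarrow> real mat" where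
  "TT n S b = mat (2*n) (2*n) (\<lambda>(r,c). if c = 2*b+1 \<and> r \<in> S then 1 else 0)"

lemma TT_carrier[simp]: "TT n S b \<in> carrier_mat (2*n) (2*n)" unfolding TT_def by simp
lemma TT_dims[simp]: "dim_row (TT n S b) = 2*n" "dim_col (TT n S b) = 2*n" unfolding TT_def by simp_all
lemma TT_entry: "r < 2*n \<Longrightarrow> c < 2*n \<Longrightarrow> TT n S b $$ (r,c) = (if c = 2*b+1 \<and> r \<in> S then 1 else 0)"
  unfolding TT_def by simp

lemma rq_one: "rq m (1\<^sub>m m) v = (\<Sum>i<m. v i * v i)"
proof -
  have "(\<Sum>j<m. v i * 1\<^sub>m m $$ (i,j) * v j) = v i * v i" if "i < m" for i
  proof -
    have "(\<Sum>j<m. v i * 1\<^sub>m m $$ (i,j) * v j) = (\<Sum>j<m. if j = i then v i * v i else 0)"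
      by (rule sum.cong) (use that in auto)
    then show ?thesis using that by simp
  qed
  then show ?thesis unfolding rq_def by simp
qed

lemma test_channel_real:
  assumes S: "S \<subseteq> {r. odd r \<and> r < 2*n}" and b: "b < n"
  shows "real_gaussian_channel n (TT n S b) (1\<^sub>m (2*n)) (0\<^sub>v (2*n))"
proof -
  have D: "Delta n \<in> carrier_mat (2*n) (2*n)" by simp
  have TD: "TT n S b * Delta n * transpose_mat (TT n S b) = 0\<^sub>m (2*n) (2*n)"
  proof (rule eq_matI)
    fix i j assume "i < dim_row (0\<^sub>m (2*n) (2*n) :: real mat)" "j < dim_col (0\<^sub>m (2*n) (2*n) :: real mat)"
    then have i: "i < 2*n" and j: "j < 2*n" by auto
    have "(\<Sum>r<2*n. \<Sum>s<2*n. TT n S b $$ (i,r) * Delta n $$ (r,s) * TT n S b $$ (j,s)) = 0"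
      by (intro sum.neutral ballI) (use i j in \<open>auto simp: TT_entry Delta_entry\<close>)
    then show "(TT n S b * Delta n * transpose_mat (TT n S b)) $$ (i,j) = 0\<^sub>m (2*n) (2*n) $$ (i,j)"
      using triple_entry[OF TT_carrier D i j] i j by simp
  qed auto
  have psd: "psd_complex (2*n) (cmat (1\<^sub>m (2*n)) + \<i> \<cdot>\<^sub>m cmat (Delta n)
      - \<i> \<cdot>\<^sub>m cmat (TT n S b * Delta n * transpose_mat (TT n S b)))"
    unfolding TD by (subst psd3) (auto simp: cq_zero one_Delta_ok)
  have psdr: "psd_real (2*n) (1\<^sub>m (2*n))" unfolding psd_real_def
    using rq_one[of "2*n"] unfolding rq_def by (simp add: sum_nonneg)
  have r1: "\<forall>k<n. \<forall>l<n. TT n S b $$ (2*k, 2*l+1) = 0 \<and> TT n S b $$ (2*k+1, 2*l) = 0"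
    using S by (auto simp: TT_entry)
  show ?thesis unfolding real_gaussian_channel_def gaussian_channel_def
    using psd psdr r1 by auto
qed

lemma testT_entry:
  assumes A: "A \<in> carrier_mat (2*n) (2*n)" and O: "Om \<in> carrier_mat (2*n) (2*n)"
    and S: "S \<subseteq> {..<2*n}" and b: "b < n" and i: "i < 2*n" and j: "j < 2*n"
  shows "super_T n A Om (TT n S b) $$ (i,j) = - (\<Sum>r\<in>S. A $$ (i,r)) * Om $$ (j,2*b+1) * sg j"
proof -
  have inner: "(\<Sum>r<2*n. A $$ (i,r) * TT n S b $$ (r,s)) = (if s = 2*b+1 then (\<Sum>r\<in>S. A $$ (i,r)) else 0)"
    if s: "s < 2*n" for s
  proof -
    have "(\<Sum>r<2*n. A $$ (i,r) * TT n S b $$ (r,s)) = (\<Sum>r<2*n. if s = 2*b+1 then (if r \<in> S then A $$ (i,r) else 0) else 0)"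
      by (rule sum.cong) (use s in \<open>auto simp: TT_entry\<close>)
    also have "\<dots> = (if s = 2*b+1 then (\<Sum>r<2*n. if r \<in> S then A $$ (i,r) else 0) else 0)" by simp
    also have "(\<Sum>r<2*n. if r \<in> S then A $$ (i,r) else 0) = (\<Sum>r\<in>{..<2*n} \<inter> S. A $$ (i,r))"
      by (simp add: sum.inter_restrict)
    also have "{..<2*n} \<inter> S = S" using S by auto
    finally show ?thesis .
  qed
  have "(\<Sum>s<2*n. (\<Sum>r<2*n. A $$ (i,r) * TT n S b $$ (r,s)) * sg s * Om $$ (j,s))
      = (\<Sum>s<2*n. if s = 2*b+1 then (\<Sum>r\<in>S. A $$ (i,r)) * sg (2*b+1) * Om $$ (j,2*b+1) else 0)"
    by (rule sum.cong) (auto simp: inner)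
  also have "\<dots> = (\<Sum>r\<in>S. A $$ (i,r)) * sg (2*b+1) * Om $$ (j,2*b+1)" using b by simp
  finally show ?thesis using superT_entry[OF A O TT_carrier i j] by (simp add: sg_def)
qed

lemma col_nonzero:
  fixes Om :: "real mat"
  assumes O: "Om \<in> carrier_mat m m" and OTO: "transpose_mat Om * Om = 1\<^sub>m m" and c: "c < m"
  shows "\<exists>j<m. Om $$ (j,c) \<noteq> 0"
proof (rule ccontr)
  assume "\<not> ?thesis"
  then have z: "\<forall>j<m. Om $$ (j,c) = 0" by simp
  have OT: "transpose_mat Om \<in> carrier_mat m m" using O by simp
  have "(transpose_mat Om * Om) $$ (c,c) = (\<Sum>j<m. transpose_mat Om $$ (c,j) * Om $$ (j,c))"
    by (rule mult_entry[OF OT O c c])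
  also have "\<dots> = 0" using z by simp
  finally show False using OTO c by simp
qed

lemma KL:
  fixes v :: "nat \<Rightarrow> real"
  assumes O: "Om \<in> carrier_mat (2*n) (2*n)" and OTO: "transpose_mat Om * Om = 1\<^sub>m (2*n)" and n: "n \<ge> 1"
    and HS: "\<forall>b<n. (\<forall>k<n. \<forall>l<n. v (2*k+1) * Om $$ (2*l,2*b+1) = 0 \<and> v (2*k+1) * Om $$ (2*l+1,2*b+1) = 0) \<or>
                    (\<forall>k<n. \<forall>l<n. v (2*k) * Om $$ (2*l+1,2*b+1) = 0 \<and> v (2*k+1) * Om $$ (2*l,2*b+1) = 0)"
    and k0: "k0 < n" and v0: "v (2*k0+1) \<noteq> 0"
  shows "(\<forall>l<n. \<forall>b<n. Om $$ (2*l,2*b+1) = 0) \<and> (\<forall>k<n. v (2*k) = 0)"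
proof -
  have opt2: "\<forall>k<n. \<forall>l<n. v (2*k) * Om $$ (2*l+1,2*b+1) = 0 \<and> v (2*k+1) * Om $$ (2*l,2*b+1) = 0"
    if b: "b < n" for b
  proof -
    have "\<not> (\<forall>k<n. \<forall>l<n. v (2*k+1) * Om $$ (2*l,2*b+1) = 0 \<and> v (2*k+1) * Om $$ (2*l+1,2*b+1) = 0)"
    proof
      assume H: "\<forall>k<n. \<forall>l<n. v (2*k+1) * Om $$ (2*l,2*b+1) = 0 \<and> v (2*k+1) * Om $$ (2*l+1,2*b+1) = 0"
      have "\<forall>l<n. Om $$ (2*l,2*b+1) = 0 \<and> Om $$ (2*l+1,2*b+1) = 0"
      proof (intro allI impI)
        fix l assume l: "l < n"
        have "v (2*k0+1) * Om $$ (2*l,2*b+1) = 0 \<and> v (2*k0+1) * Om $$ (2*l+1,2*b+1) = 0"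
          using H k0 l by blast
        then show "Om $$ (2*l,2*b+1) = 0 \<and> Om $$ (2*l+1,2*b+1) = 0" using v0 by simp
      qed
      then have "\<forall>j<2*n. Om $$ (j,2*b+1) = 0" unfolding all2 .
      moreover have "2*b+1 < 2*n" using b by simp
      ultimately show False using col_nonzero[OF O OTO] by blast
    qed
    then show ?thesis using HS b by blast
  qed
  have c1: "\<forall>l<n. \<forall>b<n. Om $$ (2*l,2*b+1) = 0"
  proof (intro allI impI)
    fix l b assume l: "l < n" and b: "b < n"
    have "v (2*k0+1) * Om $$ (2*l,2*b+1) = 0" using opt2[OF b] k0 l by blast
    then show "Om $$ (2*l,2*b+1) = 0" using v0 by simp
  qed
  have n0: "0 < n" using n by simp
  obtain j where j: "j < 2*n" "Om $$ (j, 2*0+1) \<noteq> 0" using col_nonzero[OF O OTO, of "2*0+1"] n by auto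
  have "\<exists>l<n. j = 2*l+1"
  proof (cases "even j")
    case True
    then obtain l where jl: "j = 2*l" by (auto elim: evenE)
    then have "l < n" using j by simp
    then have "Om $$ (2*l, 2*0+1) = 0" using c1 n0 by blast
    then show ?thesis using j jl by simp
  next
    case False
    then obtain l where "j = 2*l+1" by (auto elim: oddE)
    then show ?thesis using j by auto
  qed
  then obtain l where l: "l < n" "j = 2*l+1" by blast
  have "\<forall>k<n. v (2*k) = 0"
  proof (intro allI impI)
    fix k assume k: "k < n"
    have "v (2*k) * Om $$ (2*l+1,2*0+1) = 0" using opt2[OF n0] k l(1) by blast
    then show "v (2*k) = 0" using j l by simp
  qed
  then show ?thesis using c1 by blast
qed

lemma count_lemma:
  fixes Om :: "real mat"
  assumes O: "Om \<in> carrier_mat (2*n) (2*n)" and OOT: "Om * transpose_mat Om = 1\<^sub>m (2*n)"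
    and OTO: "transpose_mat Om * Om = 1\<^sub>m (2*n)"
    and Z: "\<forall>k<n. \<forall>l<n. Om $$ (2*k,2*l+1) = 0"
  shows "\<forall>k<n. \<forall>l<n. Om $$ (2*k+1,2*l) = 0"
proof -
  have OT: "transpose_mat Om \<in> carrier_mat (2*n) (2*n)" using O by simp
  have row: "(\<Sum>j<2*n. Om $$ (i,j) * Om $$ (i,j)) = 1" if i: "i < 2*n" for i
  proof -
    have "(Om * transpose_mat Om) $$ (i,i) = (\<Sum>j<2*n. Om $$ (i,j) * transpose_mat Om $$ (j,i))"
      by (rule mult_entry[OF O OT i i])
    also have "\<dots> = (\<Sum>j<2*n. Om $$ (i,j) * Om $$ (i,j))" by (rule sum.cong) (use O i in auto)
    finally show ?thesis using OOT i by simp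
  qed
  have col: "(\<Sum>j<2*n. Om $$ (j,i) * Om $$ (j,i)) = 1" if i: "i < 2*n" for i
  proof -
    have "(transpose_mat Om * Om) $$ (i,i) = (\<Sum>j<2*n. transpose_mat Om $$ (i,j) * Om $$ (j,i))"
      by (rule mult_entry[OF OT O i i])
    also have "\<dots> = (\<Sum>j<2*n. Om $$ (j,i) * Om $$ (j,i))" by (rule sum.cong) (use O i in auto)
    finally show ?thesis using OTO i by simp
  qed
  have r2: "(\<Sum>l<n. Om $$ (2*k,2*l) * Om $$ (2*k,2*l)) = 1" if k: "k < n" for k
  proof -
    have z: "(\<Sum>l<n. Om $$ (2*k,2*l+1) * Om $$ (2*k,2*l+1)) = 0"
      by (rule sum.neutral) (use Z k in auto)
    have "(\<Sum>l<n. Om $$ (2*k,2*l) * Om $$ (2*k,2*l)) + (\<Sum>l<n. Om $$ (2*k,2*l+1) * Om $$ (2*k,2*l+1)) = 1"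
      using row[of "2*k"] k by (simp only: sum2)
    then show ?thesis using z by simp
  qed
  have c2: "(\<Sum>k<n. Om $$ (2*k,2*l) * Om $$ (2*k,2*l)) + (\<Sum>k<n. Om $$ (2*k+1,2*l) * Om $$ (2*k+1,2*l)) = 1"
    if l: "l < n" for l
    using col[of "2*l"] l by (simp only: sum2) (simp?)
  define g where "g = (\<lambda>k l. Om $$ (2*k,2*l) * Om $$ (2*k,2*l))"
  define h where "h = (\<lambda>k l. Om $$ (2*k+1,2*l) * Om $$ (2*k+1,2*l))"
  have "(\<Sum>l<n. (\<Sum>k<n. g k l) + (\<Sum>k<n. h k l)) = (\<Sum>l<n. 1::real)"
    by (rule sum.cong[OF refl]) (use c2 in \<open>simp add: g_def h_def\<close>)
  then have e1: "(\<Sum>l<n. \<Sum>k<n. g k l) + (\<Sum>l<n. \<Sum>k<n. h k l) = real n"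
    by (simp only: sum.distrib) simp
  have "(\<Sum>k<n. \<Sum>l<n. g k l) = (\<Sum>k<n. 1::real)"
    by (rule sum.cong[OF refl]) (use r2 in \<open>simp add: g_def\<close>)
  moreover have "(\<Sum>l<n. \<Sum>k<n. g k l) = (\<Sum>k<n. \<Sum>l<n. g k l)" by (rule sum.swap)
  ultimately have e2: "(\<Sum>l<n. \<Sum>k<n. g k l) = real n" by simp
  have F: "(\<Sum>l<n. \<Sum>k<n. Om $$ (2*k+1,2*l) * Om $$ (2*k+1,2*l)) = 0" using e1 e2 unfolding h_def by simp
  define f where "f = (\<lambda>l. (\<Sum>k<n. Om $$ (2*k+1,2*l) * Om $$ (2*k+1,2*l)))"
  have nn: "0 \<le> f l" for l unfolding f_def by (intro sum_nonneg) simp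
  have "\<forall>l\<in>{..<n}. f l = 0"
    using sum_nonneg_eq_0_iff[of "{..<n}" f] F nn unfolding f_def[symmetric] by blast
  show ?thesis
  proof (intro allI impI)
    fix k l assume k: "k < n" and l: "l < n"
    have fl: "(\<Sum>k<n. Om $$ (2*k+1,2*l) * Om $$ (2*k+1,2*l)) = 0"
      using \<open>\<forall>l\<in>{..<n}. f l = 0\<close> l unfolding f_def by blast
    have "\<forall>k\<in>{..<n}. Om $$ (2*k+1,2*l) * Om $$ (2*k+1,2*l) = 0"
      using sum_nonneg_eq_0_iff[of "{..<n}" "\<lambda>k. Om $$ (2*k+1,2*l) * Om $$ (2*k+1,2*l)"] fl by simp
    then show "Om $$ (2*k+1,2*l) = 0" using k by simp
  qed
qed


lemma forward:
  assumes n: "n \<ge> 1" and GS: "gaussian_superchannel n A Om Y db"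
    and RS: "real_gaussian_superchannel n A Om Y db"
  shows "((\<forall>k<n. db $ (2*k+1) = 0) \<and> (\<forall>k<n. \<forall>l<n. Y $$ (2*k, 2*l+1) = 0)) \<and>
    ((\<forall>k<n. \<forall>l<n. A $$ (2*k+1, 2*l) = 0 \<and> A $$ (2*k+1, 2*l+1) = 0) \<or>
     (\<forall>k<n. \<forall>l<n. A $$ (2*k, 2*l+1) = 0 \<and> A $$ (2*k+1, 2*l) = 0 \<and>
                  Om $$ (2*k, 2*l+1) = 0 \<and> Om $$ (2*k+1, 2*l) = 0))"
proof -
  from GS have A: "A \<in> carrier_mat (2*n) (2*n)" and O: "Om \<in> carrier_mat (2*n) (2*n)"
    and Y: "Y \<in> carrier_mat (2*n) (2*n)" and db: "db \<in> carrier_vec (2*n)"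
    and OOT: "Om * transpose_mat Om = 1\<^sub>m (2*n)"
    unfolding gaussian_superchannel_def by auto
  have OT: "transpose_mat Om \<in> carrier_mat (2*n) (2*n)" using O by simp
  have OTO: "transpose_mat Om * Om = 1\<^sub>m (2*n)" by (rule mat_mult_left_right_inverse[OF O OT OOT])
  have H: "real_gaussian_channel n (super_T n A Om T) (super_N A Y N) (super_d A db d)"
    if "real_gaussian_channel n T N d" for T N d
    using RS that unfolding real_gaussian_superchannel_def by blast
  have z0: "\<forall>k<n. (0\<^sub>v (2*n) :: real vec) $ (2*k+1) = 0" by simp
  have R1: "real_gaussian_channel n (super_T n A Om (1\<^sub>m (2*n))) (super_N A Y (0\<^sub>m (2*n) (2*n))) (super_d A db (0\<^sub>v (2*n)))"
    by (rule H, rule id_channel_real[OF zero_carrier_vec z0])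
  have dbodd: "\<forall>k<n. db $ (2*k+1) = 0"
  proof (intro allI impI)
    fix k assume k: "k < n"
    have "super_d A db (0\<^sub>v (2*n)) $ (2*k+1) = 0" using R1 k unfolding real_gaussian_channel_def by blast
    moreover have "(\<Sum>r<2*n. A $$ (2*k+1,r) * (0\<^sub>v (2*n)) $ r) = 0" by (intro sum.neutral ballI) simp
    ultimately show "db $ (2*k+1) = 0" using superd_entry[OF A zero_carrier_vec db, of "2*k+1"] k by simp
  qed
  have Yeo: "\<forall>k<n. \<forall>l<n. Y $$ (2*k, 2*l+1) = 0"
  proof (intro allI impI)
    fix k l assume k: "k < n" and l: "l < n"
    have "super_N A Y (0\<^sub>m (2*n) (2*n)) $$ (2*k, 2*l+1) = 0" using R1 k l unfolding real_gaussian_channel_def by blast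
    moreover have "(\<Sum>r<2*n. \<Sum>s<2*n. A $$ (2*k,r) * (0\<^sub>m (2*n) (2*n)) $$ (r,s) * A $$ (2*l+1,s)) = 0"
      by (intro sum.neutral ballI) simp
    ultimately show "Y $$ (2*k, 2*l+1) = 0" using superN_entry[OF A zero_carrier_mat Y, of "2*k" "2*l+1"] k l by simp
  qed
  have Aoe: "\<forall>k<n. \<forall>l<n. A $$ (2*k+1, 2*l) = 0"
  proof (intro allI impI)
    fix k l assume k: "k < n" and l: "l < n"
    define u where "u = (unit_vec (2*n) (2*l) :: real vec)"
    have u: "u \<in> carrier_vec (2*n)" unfolding u_def by simp
    have uo: "\<forall>k<n. u $ (2*k+1) = 0"
    proof (intro allI impI)
      fix k' assume k': "k' < n"
      have "2*k'+1 < 2*n" "2*l < 2*n" using k' l by simp_all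
      then show "u $ (2*k'+1) = 0" unfolding u_def by simp
    qed
    have R2: "real_gaussian_channel n (super_T n A Om (1\<^sub>m (2*n))) (super_N A Y (0\<^sub>m (2*n) (2*n))) (super_d A db u)"
      by (rule H, rule id_channel_real[OF u uo])
    have "super_d A db u $ (2*k+1) = 0" using R2 k unfolding real_gaussian_channel_def by blast
    moreover have "(\<Sum>r<2*n. A $$ (2*k+1,r) * u $ r) = (\<Sum>r<2*n. if r = 2*l then A $$ (2*k+1,2*l) else 0)"
      by (rule sum.cong) (use l in \<open>auto simp: u_def\<close>)
    moreover have "\<dots> = A $$ (2*k+1,2*l)" using l by simp
    ultimately show "A $$ (2*k+1, 2*l) = 0" using superd_entry[OF A u db, of "2*k+1"] k dbodd by simp
  qed
  have HS: "\<forall>b<n. (\<forall>k<n. \<forall>l<n. (\<Sum>r\<in>S. A $$ (2*k+1,r)) * Om $$ (2*l,2*b+1) = 0 \<and> (\<Sum>r\<in>S. A $$ (2*k+1,r)) * Om $$ (2*l+1,2*b+1) = 0) \<or>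
                    (\<forall>k<n. \<forall>l<n. (\<Sum>r\<in>S. A $$ (2*k,r)) * Om $$ (2*l+1,2*b+1) = 0 \<and> (\<Sum>r\<in>S. A $$ (2*k+1,r)) * Om $$ (2*l,2*b+1) = 0)"
    if S: "S \<subseteq> {r. odd r \<and> r < 2*n}" for S
  proof (intro allI impI)
    fix b assume b: "b < n"
    have S': "S \<subseteq> {..<2*n}" using S by auto
    have TZ: "(super_T n A Om (TT n S b) $$ (i,j) = 0) = ((\<Sum>r\<in>S. A $$ (i,r)) * Om $$ (j,2*b+1) = 0)"
      if "i < 2*n" "j < 2*n" for i j
      using testT_entry[OF A O S' b that] by simp
    have R3: "real_gaussian_channel n (super_T n A Om (TT n S b)) (super_N A Y (1\<^sub>m (2*n))) (super_d A db (0\<^sub>v (2*n)))"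
      by (rule H, rule test_channel_real[OF S b])
    then have D: "(\<forall>k<n. \<forall>l<n. super_T n A Om (TT n S b) $$ (2*k+1, 2*l) = 0 \<and> super_T n A Om (TT n S b) $$ (2*k+1, 2*l+1) = 0) \<or>
      (\<forall>k<n. \<forall>l<n. super_T n A Om (TT n S b) $$ (2*k, 2*l+1) = 0 \<and> super_T n A Om (TT n S b) $$ (2*k+1, 2*l) = 0)"
      unfolding real_gaussian_channel_def by blast
    then show "(\<forall>k<n. \<forall>l<n. (\<Sum>r\<in>S. A $$ (2*k+1,r)) * Om $$ (2*l,2*b+1) = 0 \<and> (\<Sum>r\<in>S. A $$ (2*k+1,r)) * Om $$ (2*l+1,2*b+1) = 0) \<or>
                    (\<forall>k<n. \<forall>l<n. (\<Sum>r\<in>S. A $$ (2*k,r)) * Om $$ (2*l+1,2*b+1) = 0 \<and> (\<Sum>r\<in>S. A $$ (2*k+1,r)) * Om $$ (2*l,2*b+1) = 0)"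
    proof
      assume D1: "\<forall>k<n. \<forall>l<n. super_T n A Om (TT n S b) $$ (2*k+1, 2*l) = 0 \<and> super_T n A Om (TT n S b) $$ (2*k+1, 2*l+1) = 0"
      have "\<forall>k<n. \<forall>l<n. (\<Sum>r\<in>S. A $$ (2*k+1,r)) * Om $$ (2*l,2*b+1) = 0 \<and> (\<Sum>r\<in>S. A $$ (2*k+1,r)) * Om $$ (2*l+1,2*b+1) = 0"
      proof (intro allI impI)
        fix k l assume k: "k < n" and l: "l < n"
        have "super_T n A Om (TT n S b) $$ (2*k+1, 2*l) = 0" "super_T n A Om (TT n S b) $$ (2*k+1, 2*l+1) = 0"
          using D1 k l by blast+
        then show "(\<Sum>r\<in>S. A $$ (2*k+1,r)) * Om $$ (2*l,2*b+1) = 0 \<and> (\<Sum>r\<in>S. A $$ (2*k+1,r)) * Om $$ (2*l+1,2*b+1) = 0"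
          using TZ[of "2*k+1" "2*l"] TZ[of "2*k+1" "2*l+1"] k l by simp
      qed
      then show ?thesis by blast
    next
      assume D2: "\<forall>k<n. \<forall>l<n. super_T n A Om (TT n S b) $$ (2*k, 2*l+1) = 0 \<and> super_T n A Om (TT n S b) $$ (2*k+1, 2*l) = 0"
      have "\<forall>k<n. \<forall>l<n. (\<Sum>r\<in>S. A $$ (2*k,r)) * Om $$ (2*l+1,2*b+1) = 0 \<and> (\<Sum>r\<in>S. A $$ (2*k+1,r)) * Om $$ (2*l,2*b+1) = 0"
      proof (intro allI impI)
        fix k l assume k: "k < n" and l: "l < n"
        have "super_T n A Om (TT n S b) $$ (2*k, 2*l+1) = 0" "super_T n A Om (TT n S b) $$ (2*k+1, 2*l) = 0"
          using D2 k l by blast+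
        then show "(\<Sum>r\<in>S. A $$ (2*k,r)) * Om $$ (2*l+1,2*b+1) = 0 \<and> (\<Sum>r\<in>S. A $$ (2*k+1,r)) * Om $$ (2*l,2*b+1) = 0"
          using TZ[of "2*k" "2*l+1"] TZ[of "2*k+1" "2*l"] k l by simp
      qed
      then show ?thesis by blast
    qed
  qed
  have main: "(\<forall>k<n. \<forall>l<n. A $$ (2*k+1, 2*l) = 0 \<and> A $$ (2*k+1, 2*l+1) = 0) \<or>
     (\<forall>k<n. \<forall>l<n. A $$ (2*k, 2*l+1) = 0 \<and> A $$ (2*k+1, 2*l) = 0 \<and>
                  Om $$ (2*k, 2*l+1) = 0 \<and> Om $$ (2*k+1, 2*l) = 0)"
  proof (cases "\<forall>k<n. \<forall>l<n. A $$ (2*k+1, 2*l+1) = 0")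
    case True
    then show ?thesis using Aoe by blast
  next
    case False
    then obtain k0 a where k0: "k0 < n" and a: "a < n" and nz: "A $$ (2*k0+1, 2*a+1) \<noteq> 0" by blast
    have single: "(\<forall>l<n. \<forall>b<n. Om $$ (2*l,2*b+1) = 0) \<and> (\<forall>k<n. A $$ (2*k, 2*a'+1) = 0)"
      if a': "a' < n" and nz': "A $$ (2*k0+1, 2*a'+1) \<noteq> 0" for a'
    proof -
      have S: "{2*a'+1} \<subseteq> {r. odd r \<and> r < 2*n}" using a' by auto
      have "(\<forall>l<n. \<forall>b<n. Om $$ (2*l,2*b+1) = 0) \<and> (\<forall>k<n. (\<lambda>i. \<Sum>r\<in>{2*a'+1}. A $$ (i,r)) (2*k) = 0)"
        by (rule KL[OF O OTO n HS[OF S] k0]) (use nz' in simp)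
      then show ?thesis by simp
    qed
    have Oeo: "\<forall>l<n. \<forall>b<n. Om $$ (2*l,2*b+1) = 0" using single[OF a nz] by blast
    have Aeo: "A $$ (2*k, 2*a'+1) = 0" if k: "k < n" and a': "a' < n" for k a'
    proof (cases "A $$ (2*k0+1, 2*a'+1) = 0")
      case False
      then show ?thesis using single[OF a'] k by blast
    next
      case True
      then have ne: "a' \<noteq> a" using nz by auto
      have S: "{2*a+1, 2*a'+1} \<subseteq> {r. odd r \<and> r < 2*n}" using a a' by auto
      have sum2e: "(\<Sum>r\<in>{2*a+1, 2*a'+1}. A $$ (i,r)) = A $$ (i,2*a+1) + A $$ (i,2*a'+1)" for i
        using ne by simp
      have "(\<forall>l<n. \<forall>b<n. Om $$ (2*l,2*b+1) = 0) \<and> (\<forall>k<n. (\<lambda>i. \<Sum>r\<in>{2*a+1, 2*a'+1}. A $$ (i,r)) (2*k) = 0)"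
        by (rule KL[OF O OTO n HS[OF S] k0]) (use nz True ne in simp)
      then have "A $$ (2*k,2*a+1) + A $$ (2*k,2*a'+1) = 0" using k unfolding sum2e by blast
      moreover have "A $$ (2*k,2*a+1) = 0" using single[OF a nz] k by blast
      ultimately show ?thesis by simp
    qed
    have Ooe: "\<forall>k<n. \<forall>l<n. Om $$ (2*k+1,2*l) = 0" by (rule count_lemma[OF O OOT OTO Oeo])
    show ?thesis using Aeo Aoe Oeo Ooe by blast
  qed
  show ?thesis using dbodd Yeo main by blast
qed

theorem theorem1:
  fixes n :: nat and A Om Y :: "real mat" and db :: "real vec"
  assumes "n \<ge> 1"
    and "gaussian_superchannel n A Om Y db"
  shows "real_gaussian_superchannel n A Om Y db \<longleftrightarrow>
    ((\<forall>k<n. db $ (2*k+1) = 0) \<and> (\<forall>k<n. \<forall>l<n. Y $$ (2*k, 2*l+1) = 0)) \<and>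
    ((\<forall>k<n. \<forall>l<n. A $$ (2*k+1, 2*l) = 0 \<and> A $$ (2*k+1, 2*l+1) = 0) \<or>
     (\<forall>k<n. \<forall>l<n. A $$ (2*k, 2*l+1) = 0 \<and> A $$ (2*k+1, 2*l) = 0 \<and>
                  Om $$ (2*k, 2*l+1) = 0 \<and> Om $$ (2*k+1, 2*l) = 0))"
proof
  assume "real_gaussian_superchannel n A Om Y db"
  then show "((\<forall>k<n. db $ (2*k+1) = 0) \<and> (\<forall>k<n. \<forall>l<n. Y $$ (2*k, 2*l+1) = 0)) \<and>
    ((\<forall>k<n. \<forall>l<n. A $$ (2*k+1, 2*l) = 0 \<and> A $$ (2*k+1, 2*l+1) = 0) \<or>
     (\<forall>k<n. \<forall>l<n. A $$ (2*k, 2*l+1) = 0 \<and> A $$ (2*k+1, 2*l) = 0 \<and>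
                  Om $$ (2*k, 2*l+1) = 0 \<and> Om $$ (2*k+1, 2*l) = 0))"
    by (rule forward[OF assms])
next
  assume C: "((\<forall>k<n. db $ (2*k+1) = 0) \<and> (\<forall>k<n. \<forall>l<n. Y $$ (2*k, 2*l+1) = 0)) \<and>
    ((\<forall>k<n. \<forall>l<n. A $$ (2*k+1, 2*l) = 0 \<and> A $$ (2*k+1, 2*l+1) = 0) \<or>
     (\<forall>k<n. \<forall>l<n. A $$ (2*k, 2*l+1) = 0 \<and> A $$ (2*k+1, 2*l) = 0 \<and>
                  Om $$ (2*k, 2*l+1) = 0 \<and> Om $$ (2*k+1, 2*l) = 0))"
  show "real_gaussian_superchannel n A Om Y db"
    unfolding real_gaussian_superchannel_def
  proof (intro conjI allI impI)
    show "gaussian_superchannel n A Om Y db" by (rule assms(2))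
  next
    fix T N d assume "real_gaussian_channel n T N d"
    then show "real_gaussian_channel n (super_T n A Om T) (super_N A Y N) (super_d A db d)"
      using reverse_real[OF assms(2)] C by blast
  qed
qed

end
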